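(* Let $(\mathcal{M},\delta)$ be a finite metric space and $k$ an integer with $2\le k<|\mathcal{M}|$. Let $\alpha=\min\{GR_P : P\subset\mathcal{M},\ |P|=k\}$ be the optimal gap ratio, and let $S_k$ be the output of the farthest-point-insertion procedure: choose $q_1,q_2\in\mathcal{M}$ with $\delta(q_1,q_2)=\operatorname{diam}(\mathcal{M})$, set $S_2=\{q_1,q_2\}$, and for $i=2,\dots,k-1$ let $q_{i+1}$ be any point of $\mathcal{M}$ maximizing $\delta(\cdot,S_i)$ and set $S_{i+1}=S_i\cup\{q_{i+1}\}$. Then $GR_{S_k}\le\rho\,\alpha$, where: (i) if $\alpha\ge1$, $\rho=\frac{2}{\alpha}\le 2$; (ii) if $\frac23\le\alpha<1$, $\rho=\frac{2}{\alpha}\le3$; (iii) if $\alpha<\frac23$, $\rho=\frac{4}{2-\alpha}<3$.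
   Context: For a metric space $(\mathcal{M},\delta)$ and a finite nonempty set $S\subset\mathcal{M}$, $\delta(x,S)=\min_{s\in S}\delta(x,s)$ and $R_S=\sup_{x\in\mathcal{M}}\delta(x,S)$; if $|S|\ge2$, $r_S=\min_{p,q\in S,\,p\ne q}\delta(p,q)/2$ and the gap ratio is $GR_S=R_S/r_S$. *)

theory Defs
  imports Main "HOL.Real"
begin

definition metric_on :: "'a set \<Rightarrow> ('a \<Rightarrow> 'a \<Rightarrow> real) \<Rightarrow> bool" where
  "metric_on M d \<longleftrightarrow>
     (\<forall>x\<in>M. \<forall>y\<in>M. 0 \<le> d x y \<and> (d x y = 0 \<longleftrightarrow> x = y) \<and> d x y = d y x) \<and>
     (\<forall>x\<in>M. \<forall>y\<in>M. \<forall>z\<in>M. d x z \<le> d x y + d y z)"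

definition dist_set :: "('a \<Rightarrow> 'a \<Rightarrow> real) \<Rightarrow> 'a \<Rightarrow> 'a set \<Rightarrow> real" where
  "dist_set d x S = Min ((\<lambda>s. d x s) ` S)"

definition covering_radius :: "'a set \<Rightarrow> ('a \<Rightarrow> 'a \<Rightarrow> real) \<Rightarrow> 'a set \<Rightarrow> real" where
  "covering_radius M d S = Max ((\<lambda>x. dist_set d x S) ` M)"

definition packing_radius :: "('a \<Rightarrow> 'a \<Rightarrow> real) \<Rightarrow> 'a set \<Rightarrow> real" where
  "packing_radius d S = Min {d p q | p q. p \<in> S \<and> q \<in> S \<and> p \<noteq> q} / 2"

definition gap_ratio :: "'a set \<Rightarrow> ('a \<Rightarrow> 'a \<Rightarrow> real) \<Rightarrow> 'a set \<Rightarrow> real" where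
  "gap_ratio M d S = covering_radius M d S / packing_radius d S"

definition diameter :: "'a set \<Rightarrow> ('a \<Rightarrow> 'a \<Rightarrow> real) \<Rightarrow> real" where
  "diameter M d = Max {d p q | p q. p \<in> M \<and> q \<in> M}"

definition opt_gap_ratio :: "'a set \<Rightarrow> ('a \<Rightarrow> 'a \<Rightarrow> real) \<Rightarrow> nat \<Rightarrow> real" where
  "opt_gap_ratio M d k = Min {gap_ratio M d P | P. P \<subset> M \<and> card P = k}"

definition rho :: "real \<Rightarrow> real" where
  "rho \<alpha> = (if 2/3 \<le> \<alpha> then 2 / \<alpha> else 4 / (2 - \<alpha>))"

definition fpi_run :: "'a set \<Rightarrow> ('a \<Rightarrow> 'a \<Rightarrow> real) \<Rightarrow> nat \<Rightarrow> (nat \<Rightarrow> 'a) \<Rightarrow> bool" where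
  "fpi_run M d k q \<longleftrightarrow>
     q 1 \<in> M \<and> q 2 \<in> M \<and> d (q 1) (q 2) = diameter M d \<and>
     (\<forall>i. 2 \<le> i \<and> i \<le> k - 1 \<longrightarrow>
        q (i+1) \<in> M \<and>
        (\<forall>x\<in>M. dist_set d x (q ` {1..i}) \<le> dist_set d (q (i+1)) (q ` {1..i})))"

end

theory Submission
  imports Defs
begin

lemma ds_le: "finite S \<Longrightarrow> s \<in> S \<Longrightarrow> dist_set d x S \<le> d x s"
  unfolding dist_set_def by (rule Min_le) auto

lemma ds_attain: "finite S \<Longrightarrow> S \<noteq> {} \<Longrightarrow> \<exists>s\<in>S. dist_set d x S = d x s"
proof -
  assume "finite S" "S \<noteq> {}"
  then have "Min ((\<lambda>s. d x s) ` S) \<in> (\<lambda>s. d x s) ` S" by (intro Min_in) auto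
  then show ?thesis unfolding dist_set_def by auto
qed

lemma ds_mono: "finite S' \<Longrightarrow> S \<noteq> {} \<Longrightarrow> S \<subseteq> S' \<Longrightarrow> dist_set d x S' \<le> dist_set d x S"
  by (metis ds_attain ds_le infinite_super subsetD)

lemma pair_min_le:
  assumes "finite S" "p \<in> S" "p' \<in> S" "p \<noteq> p'"
  shows "Min {d a b | a b. a \<in> S \<and> b \<in> S \<and> a \<noteq> b} \<le> d p p'"
proof -
  have "{d a b | a b. a \<in> S \<and> b \<in> S \<and> a \<noteq> b} \<subseteq> (\<lambda>(a,b). d a b) ` (S \<times> S)" by auto
  then have "finite {d a b | a b. a \<in> S \<and> b \<in> S \<and> a \<noteq> b}" using assms(1) finite_subset by blast
  then show ?thesis by (rule Min_le) (use assms in auto)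
qed

lemma pair_min_in:
  assumes "finite S" "p \<in> S" "p' \<in> S" "p \<noteq> p'"
  shows "\<exists>a b. a \<in> S \<and> b \<in> S \<and> a \<noteq> b \<and> Min {d a b | a b. a \<in> S \<and> b \<in> S \<and> a \<noteq> b} = d a b"
proof -
  have "{d a b | a b. a \<in> S \<and> b \<in> S \<and> a \<noteq> b} \<subseteq> (\<lambda>(a,b). d a b) ` (S \<times> S)" by auto
  then have "finite {d a b | a b. a \<in> S \<and> b \<in> S \<and> a \<noteq> b}" using assms(1) finite_subset by blast
  then have "Min {d a b | a b. a \<in> S \<and> b \<in> S \<and> a \<noteq> b} \<in> {d a b | a b. a \<in> S \<and> b \<in> S \<and> a \<noteq> b}"
    by (rule Min_in) (use assms in auto)
  then show ?thesis by auto
qed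

lemma cov_attain:
  assumes "finite M" "M \<noteq> {}"
  shows "\<exists>x\<in>M. covering_radius M d S = dist_set d x S"
proof -
  have "Max ((\<lambda>x. dist_set d x S) ` M) \<in> (\<lambda>x. dist_set d x S) ` M" by (rule Max_in) (use assms in auto)
  then show ?thesis unfolding covering_radius_def by auto
qed

lemma cov_ge: "finite M \<Longrightarrow> x \<in> M \<Longrightarrow> dist_set d x S \<le> covering_radius M d S"
  unfolding covering_radius_def by (rule Max_ge) auto

theorem theorem8:
  fixes M :: "'a set" and d :: "'a \<Rightarrow> 'a \<Rightarrow> real" and k :: nat and q :: "nat \<Rightarrow> 'a"
  assumes "finite M" and "metric_on M d"
    and "2 \<le> k" and "k < card M"
    and "fpi_run M d k q"
  shows "gap_ratio M d (q ` {1..k}) \<le> rho (opt_gap_ratio M d k) * opt_gap_ratio M d k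
         \<and> (1 \<le> opt_gap_ratio M d k \<longrightarrow> rho (opt_gap_ratio M d k) \<le> 2)
         \<and> (2/3 \<le> opt_gap_ratio M d k \<and> opt_gap_ratio M d k < 1 \<longrightarrow> rho (opt_gap_ratio M d k) \<le> 3)
         \<and> (opt_gap_ratio M d k < 2/3 \<longrightarrow> rho (opt_gap_ratio M d k) < 3)"
proof -
  note fin = assms(1)
  have pos: "\<And>x y. x \<in> M \<Longrightarrow> y \<in> M \<Longrightarrow> x \<noteq> y \<Longrightarrow> 0 < d x y"
    using assms(2) unfolding metric_on_def by (metis order_le_less)
  have zero: "\<And>x. x \<in> M \<Longrightarrow> d x x = 0"
    using assms(2) unfolding metric_on_def by blast
  have sym: "\<And>x y. x \<in> M \<Longrightarrow> y \<in> M \<Longrightarrow> d x y = d y x"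
    using assms(2) unfolding metric_on_def by blast
  have tri: "\<And>x y z. x \<in> M \<Longrightarrow> y \<in> M \<Longrightarrow> z \<in> M \<Longrightarrow> d x z \<le> d x y + d y z"
    using assms(2) unfolding metric_on_def by blast
  have q1: "q 1 \<in> M" and q2: "q 2 \<in> M" and diam: "d (q 1) (q 2) = diameter M d"
    using assms(5) unfolding fpi_run_def by auto
  have step: "\<And>i. 2 \<le> i \<Longrightarrow> i \<le> k - 1 \<Longrightarrow> q (i+1) \<in> M \<and>
        (\<forall>x\<in>M. dist_set d x (q ` {1..i}) \<le> dist_set d (q (i+1)) (q ` {1..i}))"
    using assms(5) unfolding fpi_run_def by auto
  have qM: "\<And>i. 1 \<le> i \<Longrightarrow> i \<le> k \<Longrightarrow> q i \<in> M"
  proof -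
    fix i assume i: "1 \<le> i" "i \<le> k"
    show "q i \<in> M"
    proof (cases "i \<le> 2")
      case True then have "i = 1 \<or> i = 2" using i by linarith
      then show ?thesis using q1 q2 by auto
    next
      case False
      then have "q ((i - 1) + 1) \<in> M" using step[of "i-1"] i by auto
      then show ?thesis using False by simp
    qed
  qed
  have diam_ge: "\<And>x y. x \<in> M \<Longrightarrow> y \<in> M \<Longrightarrow> d x y \<le> diameter M d"
  proof -
    fix x y assume "x \<in> M" "y \<in> M"
    have "{d p q | p q. p \<in> M \<and> q \<in> M} \<subseteq> (\<lambda>(a,b). d a b) ` (M \<times> M)" by auto
    then have "finite {d p q | p q. p \<in> M \<and> q \<in> M}" using fin finite_subset by blast
    then show "d x y \<le> diameter M d" unfolding diameter_def by (rule Max_ge) (use \<open>x \<in> M\<close> \<open>y \<in> M\<close> in auto)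
  qed
  have card2: "2 \<le> card M" using assms(3,4) by linarith
  obtain a b where ab: "a \<in> M" "b \<in> M" "a \<noteq> b"
  proof -
    obtain a where "a \<in> M" using card2 by fastforce
    moreover have "M - {a} \<noteq> {}"
    proof
      assume "M - {a} = {}"
      then have "M \<subseteq> {a}" by blast
      then have "card M \<le> card {a}" by (intro card_mono) auto
      then show False using card2 by simp
    qed
    then obtain b where "b \<in> M - {a}" by blast
    ultimately show ?thesis using that by blast
  qed
  have q12: "q 1 \<noteq> q 2"
  proof
    assume "q 1 = q 2"
    then have "diameter M d = 0" using diam zero q1 by simp
    moreover have "0 < d a b" using pos ab by blast
    ultimately show False using diam_ge[OF ab(1,2)] by linarith
  qed
  have newpt: "\<And>j. 3 \<le> j \<Longrightarrow> j \<le> k \<Longrightarrow> q j \<notin> q ` {1..j-1}"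
  proof -
    fix j assume j: "3 \<le> j" "j \<le> k"
    let ?T = "q ` {1..j-1}"
    have "card ?T \<le> j - 1" using card_image_le[of "{1..j-1}" q] by simp
    then have "card ?T < card M" using j assms(4) by linarith
    then have "\<not> M \<subseteq> ?T" using card_mono[OF finite_imageI[of "{1..j-1}" q]] by (metis finite_atLeastAtMost not_le)
    then obtain x where x: "x \<in> M" "x \<notin> ?T" by blast
    have Tne: "?T \<noteq> {}" using j by auto
    have TM: "?T \<subseteq> M" using qM j by auto
    obtain s where s: "s \<in> ?T" "dist_set d x ?T = d x s" using ds_attain[OF _ Tne] by blast
    have "0 < dist_set d x ?T" using s x pos TM by (metis subsetD)
    also have "dist_set d x ?T \<le> dist_set d (q ((j-1)+1)) ?T" using step[of "j-1"] j x by auto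
    finally have gt: "0 < dist_set d (q j) ?T" using j by simp
    show "q j \<notin> ?T"
    proof
      assume "q j \<in> ?T"
      then have "dist_set d (q j) ?T \<le> d (q j) (q j)" by (intro ds_le) auto
      then show False using gt zero qM[of j] j by simp
    qed
  qed
  have inj: "inj_on q {1..k}"
  proof (rule inj_onI, rule ccontr)
    fix i j assume ij: "i \<in> {1..k}" "j \<in> {1..k}" "q i = q j" "i \<noteq> j"
    have gen: "\<And>i j. i \<in> {1..k} \<Longrightarrow> j \<in> {1..k} \<Longrightarrow> i < j \<Longrightarrow> q i \<noteq> q j"
    proof -
      fix i j assume a: "i \<in> {1..k}" "j \<in> {1..k}" "i < j"
      show "q i \<noteq> q j"
      proof (cases "j \<le> 2")
        case True then have "i = 1" "j = 2" using a by auto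
        then show ?thesis using q12 by simp
      next
        case False
        then have "q j \<notin> q ` {1..j-1}" using newpt a by auto
        moreover have "i \<in> {1..j-1}" using a by auto
        ultimately show ?thesis by (metis image_eqI)
      qed
    qed
    show False using ij gen by (metis linorder_neqE_nat)
  qed
  define S where "S = q ` {1..k}"
  define T where "T = q ` {1..k-1}"
  have cardS: "card S = k" unfolding S_def using inj card_image by fastforce
  have finS: "finite S" and finT: "finite T" unfolding S_def T_def by auto
  have SM: "S \<subseteq> M" and TM: "T \<subseteq> M" unfolding S_def T_def using qM by auto
  have TS: "T \<subseteq> S" unfolding S_def T_def by auto
  have Tne: "T \<noteq> {}" unfolding T_def using assms(3) by auto
  have cardT: "card T \<le> k - 1" unfolding T_def using card_image_le[of "{1..k-1}" q] by simp
  have C: "\<And>x i j. x \<in> M \<Longrightarrow> 1 \<le> i \<Longrightarrow> i < j \<Longrightarrow> j \<le> k \<Longrightarrow> dist_set d x T \<le> d (q i) (q j)"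
  proof -
    fix x i j assume a: "x \<in> M" "1 \<le> i" "i < j" "j \<le> k"
    show "dist_set d x T \<le> d (q i) (q j)"
    proof (cases "j = 2")
      case True
      then have "i = 1" using a by auto
      have "dist_set d x T \<le> d x (q 1)" using finT assms(3) by (intro ds_le) (auto simp: T_def)
      also have "\<dots> \<le> d (q 1) (q 2)" using diam diam_ge a q1 by simp
      finally show ?thesis using True \<open>i = 1\<close> by simp
    next
      case False
      then have j3: "3 \<le> j" using a by auto
      let ?U = "q ` {1..j-1}"
      have "dist_set d x T \<le> dist_set d (q ((k-1)+1)) (q ` {1..k-1})"
        using step[of "k-1"] a j3 unfolding T_def by auto
      also have "\<dots> = dist_set d (q k) T" using j3 a unfolding T_def by simp
      also have "\<dots> \<le> dist_set d (q k) ?U" using a j3 by (intro ds_mono) (auto simp: T_def)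
      also have "\<dots> \<le> dist_set d (q ((j-1)+1)) ?U" using step[of "j-1"] a j3 qM[of k] by auto
      also have "\<dots> = dist_set d (q j) ?U" using j3 by simp
      also have "\<dots> \<le> d (q j) (q i)" using a by (intro ds_le) auto
      also have "\<dots> = d (q i) (q j)" using sym qM a by simp
      finally show ?thesis .
    qed
  qed
  define m where "m = Min {d a b | a b. a \<in> S \<and> b \<in> S \<and> a \<noteq> b}"
  have S12: "q 1 \<in> S" "q 2 \<in> S" unfolding S_def using assms(3) by auto
  have covT: "\<And>x. x \<in> M \<Longrightarrow> dist_set d x T \<le> m"
  proof -
    fix x assume x: "x \<in> M"
    obtain a b where ab: "a \<in> S" "b \<in> S" "a \<noteq> b" "m = d a b"
      using pair_min_in[OF finS S12 q12] unfolding m_def by blast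
    obtain i where i: "i \<in> {1..k}" "a = q i" using ab S_def by auto
    obtain j where j: "j \<in> {1..k}" "b = q j" using ab S_def by auto
    have "i \<noteq> j" using ab i j by auto
    then show "dist_set d x T \<le> m"
    proof (cases "i < j")
      case True then show ?thesis using C[OF x, of i j] i j ab by auto
    next
      case False
      then have "j < i" using \<open>i \<noteq> j\<close> by auto
      then have "dist_set d x T \<le> d (q j) (q i)" using C[OF x, of j i] i j by auto
      also have "\<dots> = m" using ab i j sym qM by auto
      finally show ?thesis .
    qed
  qed
  have mpos: "0 < m"
  proof -
    obtain a b where ab: "a \<in> S" "b \<in> S" "a \<noteq> b" "m = d a b"
      using pair_min_in[OF finS S12 q12] unfolding m_def by blast
    then show ?thesis using pos SM by auto
  qed
  define R where "R = covering_radius M d S"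
  have Mne: "M \<noteq> {}" using ab by auto
  obtain xs where xs: "xs \<in> M" "R = dist_set d xs S" using cov_attain[OF fin Mne] R_def by blast
  have Sne: "S \<noteq> {}" using S12 by auto
  have Rm: "R \<le> m" using ds_mono[OF finS Tne TS, of d xs] covT[OF xs(1)] xs(2) by linarith
  have GR: "gap_ratio M d S = R / (m/2)" unfolding gap_ratio_def packing_radius_def R_def m_def by simp
  define A where "A = {gap_ratio M d P | P. P \<subset> M \<and> card P = k}"
  have finA: "finite A"
  proof -
    have "A \<subseteq> (\<lambda>P. gap_ratio M d P) ` Pow M" unfolding A_def by auto
    then show ?thesis using fin finite_subset by blast
  qed
  obtain P0 where P0: "P0 \<subseteq> M" "card P0 = k" using obtain_subset_with_card_n[of k M] assms(4) by (metis less_imp_le)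
  have "P0 \<subset> M" using P0 assms(4) by auto
  then have Ane: "A \<noteq> {}" unfolding A_def using P0 by auto
  have "opt_gap_ratio M d k \<in> A" unfolding opt_gap_ratio_def A_def[symmetric] using finA Ane by (rule Min_in)
  then obtain P where P: "P \<subset> M" "card P = k" and alpha: "opt_gap_ratio M d k = gap_ratio M d P"
    unfolding A_def by blast
  define \<alpha> where "\<alpha> = opt_gap_ratio M d k"
  define RP where "RP = covering_radius M d P"
  define mP where "mP = Min {d a b | a b. a \<in> P \<and> b \<in> P \<and> a \<noteq> b}"
  have finP: "finite P" using P fin finite_subset by blast
  have Pne: "P \<noteq> {}" using P assms(3) by auto
  have PM: "P \<subseteq> M" using P by auto
  have alpha_eq: "\<alpha> = RP / (mP / 2)" unfolding \<alpha>_def alpha gap_ratio_def packing_radius_def RP_def mP_def by simp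
  have cover: "\<And>x. x \<in> M \<Longrightarrow> \<exists>p\<in>P. d x p \<le> RP"
  proof -
    fix x assume x: "x \<in> M"
    obtain p where "p \<in> P" "dist_set d x P = d x p" using ds_attain[OF finP Pne] by blast
    then show "\<exists>p\<in>P. d x p \<le> RP" using cov_ge[OF fin x, of d P] RP_def by auto
  qed
  have sep: "\<And>p p'. p \<in> P \<Longrightarrow> p' \<in> P \<Longrightarrow> p \<noteq> p' \<Longrightarrow> mP \<le> d p p'"
    unfolding mP_def by (rule pair_min_le[OF finP])
  obtain p1 p2 where p12: "p1 \<in> P" "p2 \<in> P" "p1 \<noteq> p2"
  proof -
    obtain p1 where "p1 \<in> P" using Pne by blast
    moreover have "P - {p1} \<noteq> {}" 
    proof
      assume "P - {p1} = {}"
      then have "P \<subseteq> {p1}" by blast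
      then have "card P \<le> card {p1}" by (intro card_mono) auto
      then show False using assms(3) P(2) by simp
    qed
    then obtain p2 where "p2 \<in> P - {p1}" by blast
    ultimately show ?thesis using that by blast
  qed
  have mPpos: "0 < mP"
  proof -
    obtain a b where ab: "a \<in> P" "b \<in> P" "a \<noteq> b" "mP = d a b"
      using pair_min_in[OF finP p12] unfolding mP_def by blast
    then show ?thesis using pos PM by auto
  qed
  have RPpos: "0 < RP"
  proof -
    obtain x where x: "x \<in> M" "x \<notin> P" using P by blast
    obtain p where p: "p \<in> P" "d x p \<le> RP" using cover[OF x(1)] by blast
    have "0 < d x p" using pos x p PM by auto
    then show ?thesis using p by linarith
  qed
  have F8: "mP - RP \<le> m"
  proof -
    have "\<forall>p\<in>P. \<exists>s\<in>T. d p s \<le> m"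
    proof
      fix p assume p: "p \<in> P"
      obtain s where "s \<in> T" "dist_set d p T = d p s" using ds_attain[OF finT Tne] by blast
      then show "\<exists>s\<in>T. d p s \<le> m" using covT[of p] p PM by auto
    qed
    then obtain g where g: "\<And>p. p \<in> P \<Longrightarrow> g p \<in> T \<and> d p (g p) \<le> m" by metis
    have "g ` P \<subseteq> T" using g by auto
    then have "card (g ` P) \<le> card T" using finT card_mono by blast
    then have "card (g ` P) < card P" using cardT P(2) assms(3) by linarith
    then have "\<not> inj_on g P" using card_image by fastforce
    then obtain p p' where pp: "p \<in> P" "p' \<in> P" "p \<noteq> p'" "g p = g p'" unfolding inj_on_def by blast
    define s where "s = g p"
    have sM: "s \<in> M" using g pp TM s_def by auto
    obtain p0 where p0: "p0 \<in> P" "d s p0 \<le> RP" using cover[OF sM] by blast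
    obtain p'' where p'': "p'' \<in> P" "p'' \<noteq> p0" "d p'' s \<le> m"
    proof (cases "p = p0")
      case True
      then show ?thesis using that[of p'] pp g[of p'] s_def by auto
    next
      case False
      then show ?thesis using that[of p] pp g[of p] s_def by auto
    qed
    have "mP \<le> d p'' p0" using sep p'' p0 by auto
    also have "\<dots> \<le> d p'' s + d s p0" using tri p'' p0 sM PM by auto
    finally show ?thesis using p'' p0 by linarith
  qed
  have F9: "R \<le> 2 * RP"
  proof -
    have "\<forall>s\<in>S. \<exists>p\<in>P. d s p \<le> RP" using cover SM by auto
    then obtain h where h: "\<And>s. s \<in> S \<Longrightarrow> h s \<in> P \<and> d s (h s) \<le> RP" by metis
    show ?thesis
    proof (cases "inj_on h S")
      case False
      then obtain s t where st: "s \<in> S" "t \<in> S" "s \<noteq> t" "h s = h t" unfolding inj_on_def by blast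
      have "m \<le> d s t" unfolding m_def by (rule pair_min_le[OF finS st(1,2,3)])
      also have "\<dots> \<le> d s (h s) + d (h s) t" using tri st SM h PM by blast
      also have "d (h s) t = d t (h t)" using st sym[of "h t" t] SM h[of t] PM by auto
      finally show ?thesis using h[of s] h[of t] st Rm by linarith
    next
      case True
      have "h ` S \<subseteq> P" using h by auto
      moreover have "card (h ` S) = card P" using card_image[OF True] cardS P(2) by simp
      ultimately have hS: "h ` S = P" using finP card_subset_eq by blast
      obtain p where p: "p \<in> P" "d xs p \<le> RP" using cover[OF xs(1)] by blast
      then obtain s where s: "s \<in> S" "h s = p" using hS by blast
      have "R \<le> d xs s" using xs(2) ds_le[OF finS s(1)] by simp
      also have "\<dots> \<le> d xs p + d p s" using tri xs s SM p PM by blast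
      also have "d p s = d s (h s)" using s sym[of p s] SM PM p by auto
      finally show ?thesis using h[of s] s p by linarith
    qed
  qed
  have apos: "0 < \<alpha>" using alpha_eq RPpos mPpos by simp
  have main: "R / (m/2) \<le> rho \<alpha> * \<alpha>"
  proof (cases "2/3 \<le> \<alpha>")
    case True
    have "rho \<alpha> * \<alpha> = 2" using True apos unfolding rho_def by simp
    moreover have "R / (m/2) \<le> 2" using Rm mpos by (simp add: divide_simps)
    ultimately show ?thesis by simp
  next
    case False
    have "rho \<alpha> * \<alpha> = 4 * \<alpha> / (2 - \<alpha>)" using False unfolding rho_def by simp
    have RPa: "RP = \<alpha> * (mP/2)" using alpha_eq mPpos by simp
    have ml: "(2 - \<alpha>) * (mP/2) \<le> m" using F8 RPa by (simp add: algebra_simps)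
    have Ru: "R \<le> 2 * \<alpha> * (mP/2)" using F9 RPa by simp
    have a2: "0 < 2 - \<alpha>" using False by simp
    have "R / (m/2) \<le> 4 * \<alpha> / (2 - \<alpha>)"
    proof -
      have "R * (2 - \<alpha>) \<le> 2 * \<alpha> * (mP/2) * (2 - \<alpha>)" using Ru a2 by (intro mult_right_mono) auto
      also have "\<dots> = 2 * \<alpha> * ((2 - \<alpha>) * (mP/2))" by simp
      also have "\<dots> \<le> 2 * \<alpha> * m"
        using ml apos by (intro mult_left_mono) auto
      finally show ?thesis using mpos a2 by (simp add: divide_simps)
    qed
    then show ?thesis using \<open>rho \<alpha> * \<alpha> = _\<close> by simp
  qed
  have r1: "1 \<le> \<alpha> \<longrightarrow> rho \<alpha> \<le> 2" using apos unfolding rho_def by (simp add: divide_simps)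
  have r2: "2/3 \<le> \<alpha> \<and> \<alpha> < 1 \<longrightarrow> rho \<alpha> \<le> 3" using apos unfolding rho_def by (simp add: divide_simps)
  have r3: "\<alpha> < 2/3 \<longrightarrow> rho \<alpha> < 3" unfolding rho_def by (simp add: divide_simps)
  show ?thesis using main r1 r2 r3 GR unfolding \<alpha>_def S_def by simp
qed

end
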